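(* Let $\mathcal{A}$ be a weighted pushdown system. The following are equivalent: (i) there is an infinite path $\pi_1$ from the initial configuration with $\mathrm{LimSupAvg}(\pi_1)>0$; (ii) there is an infinite path $\pi_2$ from the initial configuration with $\mathrm{LimInfAvg}(\pi_2)>0$; (iii) there is a finite path from the initial configuration that contains (as a contiguous segment) a good cycle.
   Context: A weighted pushdown system (WPS) is $\mathcal{A}=\langle Q,\Gamma,q_0,E,w\rangle$ with finite state set $Q$, initial state $q_0$, finite stack alphabet $\Gamma$ containing a bottom symbol $\bot$ that can be neither pushed nor popped, edges $E\subseteq(Q\times\Gamma)\times(Q\times\mathrm{Com}(\Gamma))$ with $\mathrm{Com}(\Gamma)=\{\mathit{skip},\mathit{pop}\}\cup\{\mathit{push}(z):z\in\Gamma\}$, and weights $w:E\to\mathbb{Z}$. Configurations are $(\alpha,q)$, $\alpha\in\Gamma^+$ (top = last symbol), $q\in Q$; initial configuration $(\bot,q_0)$; $(\alpha',q')$ is a successor of $(\alpha,q)$ if some edge $(q,\gamma,q',\mathit{com})$ has $\gamma=\mathrm{Top}(\alpha)$ and $\alpha'=\mathit{com}(\alpha)$. A path is a sequence of successive configurations; $w(\pi)$ is the sum of weights of its edges, and for an infinite path $\pi$, $\mathrm{LimSupAvg}(\pi)=\limsup_i w(\pi[0,i])/i$ and $\mathrm{LimInfAvg}(\pi)=\liminf_i w(\pi[0,i])/i$ where $\pi[0,i]$ is the prefix with $i$ edges. A configuration $c_i=(\alpha_i,q_i)$ of a path is a local minimum if $\alpha_i$ is a prefix of $\alpha_j$ for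 all $j\geq i$ in the path. A good cycle is a finite path $\langle c_1,\dots,c_n\rangle$ with $c_1=(\alpha_1,q_1)$, $c_n=(\alpha_n,q_n)$ such that $w>0$, $c_1$ is a local minimum of this path, $q_1=q_n$ and $\mathrm{Top}(\alpha_1)=\mathrm{Top}(\alpha_n)$. *)

theory Defs
  imports Complex_Main "HOL-Library.Liminf_Limsup" "HOL-Library.Extended_Real" "HOL-Library.Sublist"
begin

datatype 'g com = Skip | Pop | Push 'g

type_synonym ('q,'g) edge = "'q \<times> 'g \<times> 'q \<times> 'g com"

(* Configurations (alpha, q); the top of the stack is the LAST list element *)
type_synonym ('q,'g) config = "'g list \<times> 'q"

fun apply_com :: "'g com \<Rightarrow> 'g list \<Rightarrow> 'g list" where
  "apply_com Skip \<alpha> = \<alpha>"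
| "apply_com Pop \<alpha> = butlast \<alpha>"
| "apply_com (Push z) \<alpha> = \<alpha> @ [z]"

(* Well-formed weighted pushdown system <Q, Gamma, q0, E, w> with bottom symbol bsym.
   The weight function is any w :: edge => int (only its values on E matter). *)
definition wps :: "'q set \<Rightarrow> 'g set \<Rightarrow> 'q \<Rightarrow> 'g \<Rightarrow> ('q,'g) edge set \<Rightarrow> bool" where
  "wps Q \<Gamma> q0 bsym E \<longleftrightarrow>
     finite Q \<and> finite \<Gamma> \<and> q0 \<in> Q \<and> bsym \<in> \<Gamma> \<and>
     E \<subseteq> {(q,\<gamma>,q',c). q \<in> Q \<and> \<gamma> \<in> \<Gamma> \<and> q' \<in> Q \<and>
                         (c = Skip \<or> c = Pop \<or> (\<exists>z\<in>\<Gamma>. c = Push z))} \<and>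
     (\<forall>q q'. (q, bsym, q', Pop) \<notin> E) \<and>
     (\<forall>q \<gamma> q'. (q, \<gamma>, q', Push bsym) \<notin> E)"

definition step :: "('q,'g) edge set \<Rightarrow> ('q,'g) config \<Rightarrow> ('q,'g) edge \<Rightarrow> ('q,'g) config \<Rightarrow> bool" where
  "step E c e c' \<longleftrightarrow> e \<in> E \<and>
     (case e of (p, \<gamma>, p', cm) \<Rightarrow>
        snd c = p \<and> fst c \<noteq> [] \<and> last (fst c) = \<gamma> \<and> snd c' = p' \<and> fst c' = apply_com cm (fst c))"

definition inf_path :: "('q,'g) edge set \<Rightarrow> (nat \<Rightarrow> ('q,'g) config) \<Rightarrow> (nat \<Rightarrow> ('q,'g) edge) \<Rightarrow> bool" where
  "inf_path E c e \<longleftrightarrow> (\<forall>i. step E (c i) (e i) (c (Suc i)))"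

definition fin_path :: "('q,'g) edge set \<Rightarrow> (nat \<Rightarrow> ('q,'g) config) \<Rightarrow> (nat \<Rightarrow> ('q,'g) edge) \<Rightarrow> nat \<Rightarrow> bool" where
  "fin_path E c e n \<longleftrightarrow> (\<forall>i<n. step E (c i) (e i) (c (Suc i)))"

definition pweight :: "(('q,'g) edge \<Rightarrow> int) \<Rightarrow> (nat \<Rightarrow> ('q,'g) edge) \<Rightarrow> nat \<Rightarrow> int" where
  "pweight w e i = (\<Sum>k<i. w (e k))"

definition lim_sup_avg :: "(('q,'g) edge \<Rightarrow> int) \<Rightarrow> (nat \<Rightarrow> ('q,'g) edge) \<Rightarrow> ereal" where
  "lim_sup_avg w e = limsup (\<lambda>i. ereal (real_of_int (pweight w e i) / real i))"

definition lim_inf_avg :: "(('q,'g) edge \<Rightarrow> int) \<Rightarrow> (nat \<Rightarrow> ('q,'g) edge) \<Rightarrow> ereal" where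
  "lim_inf_avg w e = liminf (\<lambda>i. ereal (real_of_int (pweight w e i) / real i))"

definition good_cycle :: "('q,'g) edge set \<Rightarrow> (('q,'g) edge \<Rightarrow> int) \<Rightarrow> (nat \<Rightarrow> ('q,'g) config) \<Rightarrow> (nat \<Rightarrow> ('q,'g) edge) \<Rightarrow> nat \<Rightarrow> bool" where
  "good_cycle E w c e n \<longleftrightarrow> fin_path E c e n \<and> pweight w e n > 0 \<and>
     (\<forall>j\<le>n. prefix (fst (c 0)) (fst (c j))) \<and>
     snd (c 0) = snd (c n) \<and> last (fst (c 0)) = last (fst (c n))"

end

theory Submission
  imports Defs
begin

fun nxt :: "('q,'g) edge \<Rightarrow> ('q,'g) config \<Rightarrow> ('q,'g) config" where
  "nxt (p,\<gamma>,p',cm) (\<alpha>,q) = (apply_com cm \<alpha>, p')"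

fun run :: "('q,'g) edge list \<Rightarrow> ('q,'g) config \<Rightarrow> ('q,'g) config" where
  "run [] z = z"
| "run (x#xs) z = run xs (nxt x z)"

fun vpath :: "('q,'g) edge set \<Rightarrow> ('q,'g) config \<Rightarrow> ('q,'g) edge list \<Rightarrow> bool" where
  "vpath E z [] = True"
| "vpath E z (x#xs) = (step E z x (nxt x z) \<and> vpath E (nxt x z) xs)"

definition based :: "'g list \<Rightarrow> ('q,'g) config \<Rightarrow> ('q,'g) edge list \<Rightarrow> bool" where
  "based \<alpha> z xs \<longleftrightarrow> (\<forall>i\<le>length xs. prefix \<alpha> (fst (run (take i xs) z)))"

definition lgc :: "('q,'g) edge set \<Rightarrow> (('q,'g) edge \<Rightarrow> int) \<Rightarrow> ('q,'g) config \<Rightarrow> ('q,'g) edge list \<Rightarrow> bool" where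
  "lgc E w z Cy \<longleftrightarrow> vpath E z Cy \<and> sum_list (map w Cy) > 0 \<and> based (fst z) z Cy \<and>
     snd (run Cy z) = snd z \<and> last (fst (run Cy z)) = last (fst z)"

lemma step_nxt: "step E z x z' \<Longrightarrow> z' = nxt x z"
  by (cases z; cases z'; cases x) (auto simp: step_def)

lemma run_append[simp]: "run (xs@ys) z = run ys (run xs z)"
  by (induction xs arbitrary: z) auto

lemma vpath_append[simp]: "vpath E z (xs@ys) \<longleftrightarrow> vpath E z xs \<and> vpath E (run xs z) ys"
  by (induction xs arbitrary: z) auto

lemma based_Nil[simp]: "based \<alpha> z [] \<longleftrightarrow> prefix \<alpha> (fst z)"
  by (simp add: based_def)

lemma based_Cons: "based \<alpha> z (x#xs) \<longleftrightarrow> prefix \<alpha> (fst z) \<and> based \<alpha> (nxt x z) xs"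
  apply (simp add: based_def)
  apply safe
    apply (metis le0 run.simps(1) take_0)
   apply (metis Suc_le_mono run.simps(2) take_Suc_Cons)
  by (metis Suc_le_mono not0_implies_Suc run.simps(1) run.simps(2) take_0 take_Suc_Cons)

lemma based_hd: "based \<alpha> z xs \<Longrightarrow> prefix \<alpha> (fst z)"
  unfolding based_def by (metis le0 run.simps(1) take_0)

lemma based_append[simp]: "based \<alpha> z (xs@ys) \<longleftrightarrow> based \<alpha> z xs \<and> based \<alpha> (run xs z) ys"
  by (induction xs arbitrary: z) (auto simp: based_Cons dest: based_hd)

lemma based_mono: "prefix \<alpha> \<alpha>' \<Longrightarrow> based \<alpha>' z xs \<Longrightarrow> based \<alpha> z xs"
  unfolding based_def using prefix_order.trans by blast

lemma vpath_nth: "vpath E z xs \<Longrightarrow> k < length xs \<Longrightarrow>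
   step E (run (take k xs) z) (xs!k) (run (take (Suc k) xs) z)"
proof (induction xs arbitrary: z k)
  case Nil then show ?case by simp
next
  case (Cons x xs)
  then show ?case by (cases k) auto
qed

lemma last_app_eq: "\<alpha> \<noteq> [] \<Longrightarrow> \<beta> \<noteq> [] \<Longrightarrow> last \<beta> = last \<alpha> \<Longrightarrow> last (\<beta>@v) = last (\<alpha>@v)"
  by (cases "v = []") auto

lemma replay:
  assumes "vpath E (\<alpha>0@u, q) xs" "based \<alpha>0 (\<alpha>0@u,q) xs" "\<alpha>0 \<noteq> []" "\<beta>0 \<noteq> []" "last \<beta>0 = last \<alpha>0"
  shows "vpath E (\<beta>0@u, q) xs \<and> based \<beta>0 (\<beta>0@u,q) xs \<and>
     (\<exists>v. fst (run xs (\<alpha>0@u,q)) = \<alpha>0@v \<and> run xs (\<beta>0@u,q) = (\<beta>0@v, snd (run xs (\<alpha>0@u,q))))"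
  using assms(1,2)
proof (induction xs arbitrary: u q)
  case Nil then show ?case by simp
next
  case (Cons x xs)
  obtain p \<gamma> p' cm where x: "x = (p,\<gamma>,p',cm)" by (cases x) auto
  from Cons.prems(1) have st: "step E (\<alpha>0@u,q) x (nxt x (\<alpha>0@u,q))" and vp: "vpath E (nxt x (\<alpha>0@u,q)) xs" by auto
  from Cons.prems(2) have bs: "based \<alpha>0 (nxt x (\<alpha>0@u,q)) xs" by (simp add: based_Cons)
  have pre: "prefix \<alpha>0 (apply_com cm (\<alpha>0@u))"
    using bs by (simp add: x based_def) (metis le0 run.simps(1) take_0 fst_conv)
  from st have E: "x \<in> E" "q = p" "last (\<alpha>0@u) = \<gamma>" by (auto simp: step_def x)
  have lastb: "last (\<beta>0@u) = \<gamma>" using E(3) last_app_eq[OF assms(3,4,5)] by metis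
  obtain u' where u': "apply_com cm (\<alpha>0@u) = \<alpha>0@u'" "apply_com cm (\<beta>0@u) = \<beta>0@u'"
  proof (cases cm)
    case Skip then show ?thesis using that by auto
  next
    case (Push z) then show ?thesis using that by auto
  next
    case Pop
    have "u \<noteq> []"
    proof
      assume "u = []"
      then have "prefix \<alpha>0 (butlast \<alpha>0)" using pre Pop by simp
      then have "length \<alpha>0 \<le> length (butlast \<alpha>0)" using prefix_length_le by blast
      then show False using assms(3) by (cases "length \<alpha>0") auto
    qed
    then show ?thesis using that[of "butlast u"] Pop by (simp add: butlast_append)
  qed
  have nx1: "nxt x (\<alpha>0@u,q) = (\<alpha>0@u', p')" using u' by (simp add: x)
  have nx2: "nxt x (\<beta>0@u,q) = (\<beta>0@u', p')" using u' by (simp add: x)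
  have IH: "vpath E (\<beta>0 @ u', p') xs \<and> based \<beta>0 (\<beta>0 @ u', p') xs \<and>
    (\<exists>v. fst (run xs (\<alpha>0 @ u', p')) = \<alpha>0 @ v \<and> run xs (\<beta>0 @ u', p') = (\<beta>0 @ v, snd (run xs (\<alpha>0 @ u', p'))))"
    using Cons.IH[of u' p'] vp bs nx1 by simp
  have stb: "step E (\<beta>0@u,q) x (nxt x (\<beta>0@u,q))"
    using E lastb assms(4) nx2 u' by (auto simp: step_def x)
  show ?case using IH stb nx1 nx2 by (simp add: based_Cons)
qed

lemma nxt_stack: "nxt x z = (apply_com (snd (snd (snd x))) (fst z), fst (snd (snd x)))"
  by (cases x; cases z) auto

lemma take_apply_com:
  assumes "m \<le> length \<alpha>" "m \<le> length (apply_com cm \<alpha>)"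
  shows "take m (apply_com cm \<alpha>) = take m \<alpha>"
proof (cases cm)
  case Pop
  show ?thesis
  proof (cases "\<alpha> = []")
    case False
    then have "m < length \<alpha>" using assms Pop by (cases "length \<alpha>") auto
    then show ?thesis using Pop by (simp add: take_butlast)
  qed (use Pop in simp)
qed (use assms in auto)

lemma len_apply_com: "length (apply_com cm \<alpha>) \<le> length \<alpha> + 1 \<and> length \<alpha> \<le> length (apply_com cm \<alpha>) + 1"
  by (cases cm) auto

locale pi =
  fixes Q :: "'q set" and \<Gamma> :: "'g set" and q0 :: 'q and bsym :: 'g
    and E :: "('q,'g) edge set" and c :: "nat \<Rightarrow> ('q,'g) config" and e :: "nat \<Rightarrow> ('q,'g) edge"
  assumes wps: "wps Q \<Gamma> q0 bsym E" and ip: "inf_path E c e" and c0: "c 0 = ([bsym], q0)"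
begin

definition "stk j = fst (c j)"
definition "st j = snd (c j)"
definition "hgt j = length (stk j)"
definition "lab j = (st j, last (stk j))"

lemma c_eq: "c j = (stk j, st j)" by (simp add: stk_def st_def)

lemma stp: "step E (c j) (e j) (c (Suc j))"
  using ip by (simp add: inf_path_def)

lemma cSuc: "c (Suc j) = nxt (e j) (c j)"
  using step_nxt[OF stp] .

lemma ne: "stk j \<noteq> []"
  using stp[of j] by (cases "e j") (simp add: step_def stk_def)

lemma hgt_pos: "hgt j \<ge> 1"
  using ne[of j] by (simp add: hgt_def Suc_le_eq)

lemma stkSuc: "stk (Suc j) = apply_com (snd (snd (snd (e j)))) (stk j)"
  by (simp add: stk_def cSuc nxt_stack)

lemma hgt_Suc: "hgt (Suc j) \<le> hgt j + 1" "hgt j \<le> hgt (Suc j) + 1"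
  using len_apply_com[of "snd (snd (snd (e j)))" "stk j"] by (simp_all add: hgt_def stkSuc)

lemma take_Suc_stk: "m \<le> hgt j \<Longrightarrow> m \<le> hgt (Suc j) \<Longrightarrow> take m (stk (Suc j)) = take m (stk j)"
  unfolding hgt_def stkSuc by (rule take_apply_com) (auto simp: stkSuc)

lemma take_pres:
  assumes "a \<le> b" "\<forall>j. a \<le> j \<and> j \<le> b \<longrightarrow> m \<le> hgt j"
  shows "take m (stk b) = take m (stk a)"
  using assms
proof (induction b)
  case 0 then show ?case by simp
next
  case (Suc b)
  show ?case
  proof (cases "a = Suc b")
    case True then show ?thesis by simp
  next
    case False
    then have "a \<le> b" using Suc by simp
    then have "take m (stk b) = take m (stk a)" using Suc by auto
    moreover have "take m (stk (Suc b)) = take m (stk b)"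
      using Suc.prems \<open>a \<le> b\<close> by (intro take_Suc_stk) auto
    ultimately show ?thesis by simp
  qed
qed

lemma prefix_pres:
  assumes "a \<le> b" "\<forall>j. a \<le> j \<and> j \<le> b \<longrightarrow> hgt a \<le> hgt j"
  shows "prefix (stk a) (stk b)"
proof -
  have "take (hgt a) (stk b) = take (hgt a) (stk a)" using take_pres[OF assms] .
  then have "take (hgt a) (stk b) = stk a" by (simp add: hgt_def)
  then show ?thesis by (metis take_is_prefix)
qed

lemma seg: "vpath E (c a) (map e [a..<a+n]) \<and> run (map e [a..<a+n]) (c a) = c (a+n)"
proof (induction n)
  case 0 then show ?case by simp
next
  case (Suc n)
  have "[a..<a+Suc n] = [a..<a+n] @ [a+n]" by simp
  then show ?case using Suc stp[of "a+n"] cSuc[of "a+n"] by simp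
qed

lemma seg2:
  assumes "a \<le> b"
  shows "vpath E (c a) (map e [a..<b])" "run (map e [a..<b]) (c a) = c b"
  using seg[of a "b-a"] assms by auto

lemma seg_take: "k \<le> b - a \<Longrightarrow> take k (map e [a..<b]) = map e [a..<a+k]"
  by (cases "a \<le> b") (auto simp: take_map take_upt)

lemma seg_based:
  assumes "a \<le> b" "\<forall>j. a \<le> j \<and> j \<le> b \<longrightarrow> prefix \<alpha> (stk j)"
  shows "based \<alpha> (c a) (map e [a..<b])"
  unfolding based_def
proof (intro allI impI)
  fix i assume "i \<le> length (map e [a..<b])"
  then have "i \<le> b - a" by simp
  then have "run (take i (map e [a..<b])) (c a) = c (a+i)" using seg_take seg by simp
  then show "prefix \<alpha> (fst (run (take i (map e [a..<b])) (c a)))"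
    using assms \<open>i \<le> b - a\<close> by (simp add: stk_def)
qed

lemma invar: "st j \<in> Q \<and> set (stk j) \<subseteq> \<Gamma>"
proof (induction j)
  case 0 then show ?case using wps c0 by (simp add: wps_def st_def stk_def)
next
  case (Suc j)
  obtain p \<gamma> p' cm where x: "e j = (p,\<gamma>,p',cm)" by (cases "e j") auto
  have "e j \<in> E" using stp[of j] by (simp add: step_def x)
  then have "p' \<in> Q" "cm = Skip \<or> cm = Pop \<or> (\<exists>z\<in>\<Gamma>. cm = Push z)" using wps by (auto simp: wps_def x)
  moreover have "st (Suc j) = p'" by (simp add: st_def cSuc x nxt_stack)
  moreover have "stk (Suc j) = apply_com cm (stk j)" by (simp add: stkSuc x)
  moreover have "set (apply_com cm (stk j)) \<subseteq> set (stk j) \<union> {z. cm = Push z}"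
    by (cases cm) (auto dest: in_set_butlastD)
  ultimately show ?case using Suc by auto
qed

lemma st_Q: "st j \<in> Q" using invar by blast
lemma last_G: "last (stk j) \<in> \<Gamma>" using invar ne by (meson last_in_set subsetD)
lemma lab_QG: "lab j \<in> Q \<times> \<Gamma>" using st_Q last_G by (simp add: lab_def)

lemma fQ: "finite Q" and fG: "finite \<Gamma>" using wps by (auto simp: wps_def)

definition "glm g \<longleftrightarrow> (\<forall>j\<ge>g. hgt g \<le> hgt j)"

lemma glm_prefix: "glm g \<Longrightarrow> g \<le> j \<Longrightarrow> prefix (stk g) (stk j)"
  by (rule prefix_pres) (auto simp: glm_def)

lemma ex_glm: "\<exists>g\<ge>n. glm g"
proof -
  define m where "m = (LEAST m. \<exists>j\<ge>n. hgt j = m)"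
  have "\<exists>j\<ge>n. hgt j = m" unfolding m_def by (rule LeastI_ex) blast
  then obtain j where j: "j \<ge> n" "hgt j = m" by blast
  have "glm j" unfolding glm_def
  proof (intro allI impI)
    fix i assume "j \<le> i"
    then have "\<exists>k\<ge>n. hgt k = hgt i" using j by (intro exI[of _ i]) auto
    then show "hgt j \<le> hgt i" unfolding j(2) m_def by (rule Least_le)
  qed
  then show ?thesis using j by blast
qed

lemma sum_seg: "a \<le> b \<Longrightarrow> sum_list (map w (map e [a..<b])) = pweight w e b - pweight w e a"
proof -
  assume "a \<le> b"
  have "sum_list (map w (map e [a..<b])) = (\<Sum>k=a..<b. w (e k))"
    using sum_set_upt_conv_sum_list_nat[of "\<lambda>k. w (e k)" a b] by (simp add: comp_def)
  also have "\<dots> = (\<Sum>k<b. w (e k)) - (\<Sum>k<a. w (e k))"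
    using \<open>a \<le> b\<close> by (simp add: sum_diff_nat_ivl lessThan_atLeast0)
  finally show ?thesis by (simp add: pweight_def)
qed

end

context pi
begin

lemma hgt0: "hgt 0 = 1" using c0 by (simp add: hgt_def stk_def)

definition "kk t l = (GREATEST j. j \<le> t \<and> hgt j \<le> l)"
definition "dd t = (LEAST m. \<exists>j\<ge>t. hgt j = m)"
definition "ff t l = (LEAST j. t \<le> j \<and> hgt j \<le> l)"

lemma kk_props: "1 \<le> l \<Longrightarrow> kk t l \<le> t \<and> hgt (kk t l) \<le> l"
  unfolding kk_def by (rule GreatestI_nat[of _ 0 t]) (auto simp: hgt0)

lemma kk_ge: "1 \<le> l \<Longrightarrow> j \<le> t \<Longrightarrow> hgt j \<le> l \<Longrightarrow> j \<le> kk t l"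
  unfolding kk_def by (rule Greatest_le_nat[of _ j t]) auto

lemma kk_after: "1 \<le> l \<Longrightarrow> kk t l < j \<Longrightarrow> j \<le> t \<Longrightarrow> l < hgt j"
  using kk_ge[of l j t] by (meson leD le_less_linear)

lemma kk_hgt: assumes "1 \<le> l" "l \<le> hgt t" shows "hgt (kk t l) = l"
proof (cases "kk t l = t")
  case True then show ?thesis using kk_props[OF assms(1), of t] assms by simp
next
  case False
  then have "kk t l < t" using kk_props[OF assms(1), of t] by simp
  then have "l < hgt (Suc (kk t l))" using kk_after[OF assms(1), where t=t and j="Suc (kk t l)"] by simp
  then show ?thesis using hgt_Suc(1)[of "kk t l"] kk_props[OF assms(1), of t] by simp
qed

lemma kk_above: "1 \<le> l \<Longrightarrow> l \<le> hgt t \<Longrightarrow> kk t l \<le> j \<Longrightarrow> j \<le> t \<Longrightarrow> l \<le> hgt j"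
proof -
  assume a: "1 \<le> l" "l \<le> hgt t" "kk t l \<le> j" "j \<le> t"
  show ?thesis
  proof (cases "kk t l = j")
    case True then show ?thesis using kk_hgt[OF a(1,2)] by simp
  next
    case False then show ?thesis using kk_after[OF a(1), where t=t and j=j] a by simp
  qed
qed

lemma kk_stk: assumes "1 \<le> l" "l \<le> hgt t" shows "stk (kk t l) = take l (stk t)"
proof -
  have "take l (stk t) = take l (stk (kk t l))"
    using kk_props[OF assms(1), of t] kk_above[OF assms] by (intro take_pres) auto
  then show ?thesis using kk_hgt[OF assms] by (simp add: hgt_def)
qed

lemma kk_mono: "1 \<le> l \<Longrightarrow> l \<le> l' \<Longrightarrow> kk t l \<le> kk t l'"
  using kk_props[of l t] by (intro kk_ge) auto

lemma kk_top: "kk t (hgt t) = t"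
  using kk_props[of "hgt t" t] kk_ge[of "hgt t" t t] hgt_pos[of t] by simp

lemma dd_ex: "\<exists>j\<ge>t. hgt j = dd t"
  unfolding dd_def by (rule LeastI_ex) blast

lemma dd_le: "t \<le> j \<Longrightarrow> dd t \<le> hgt j"
  unfolding dd_def by (rule Least_le) blast

lemma dd_pos: "1 \<le> dd t" using dd_ex[of t] hgt_pos by metis

lemma dd_top: "dd t \<le> hgt t" using dd_le by simp

lemma ff_props: "dd t \<le> l \<Longrightarrow> t \<le> ff t l \<and> hgt (ff t l) \<le> l"
proof -
  assume a: "dd t \<le> l"
  obtain j where "j \<ge> t" "hgt j = dd t" using dd_ex by blast
  then have "\<exists>j. t \<le> j \<and> hgt j \<le> l" using a by auto
  then show ?thesis unfolding ff_def by (rule LeastI_ex)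
qed

lemma ff_before: "t \<le> j \<Longrightarrow> j < ff t l \<Longrightarrow> l < hgt j"
proof -
  assume a: "t \<le> j" "j < ff t l"
  have "\<not> (t \<le> j \<and> hgt j \<le> l)" using not_less_Least[OF a(2)[unfolded ff_def]] .
  then show ?thesis using a(1) by simp
qed

lemma ff_le: "t \<le> j \<Longrightarrow> hgt j \<le> l \<Longrightarrow> ff t l \<le> j"
  unfolding ff_def by (rule Least_le) simp

lemma ff_hgt: assumes "dd t \<le> l" "l \<le> hgt t" shows "hgt (ff t l) = l"
proof (cases "ff t l = t")
  case True then show ?thesis using ff_props[OF assms(1)] assms by simp
next
  case False
  then have "t < ff t l" using ff_props[OF assms(1)] by simp
  define j where "j = ff t l - 1"
  have j: "ff t l = Suc j" "t \<le> j" using \<open>t < ff t l\<close> by (auto simp: j_def)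
  then have "l < hgt j" using ff_before[of t j l] by simp
  then show ?thesis using hgt_Suc(2)[of j] j ff_props[OF assms(1)] by simp
qed

lemma ff_above: "dd t \<le> l \<Longrightarrow> l \<le> hgt t \<Longrightarrow> t \<le> j \<Longrightarrow> j \<le> ff t l \<Longrightarrow> l \<le> hgt j"
proof -
  assume a: "dd t \<le> l" "l \<le> hgt t" "t \<le> j" "j \<le> ff t l"
  show ?thesis
  proof (cases "j = ff t l")
    case True then show ?thesis using ff_hgt[OF a(1,2)] by simp
  next
    case False then show ?thesis using ff_before[of t j l] a by simp
  qed
qed

lemma ff_stk: assumes "dd t \<le> l" "l \<le> hgt t" shows "stk (ff t l) = take l (stk t)"
proof -
  have "take l (stk (ff t l)) = take l (stk t)"
    using ff_props[OF assms(1)] ff_above[OF assms] by (intro take_pres) auto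
  then show ?thesis using ff_hgt[OF assms] by (simp add: hgt_def)
qed

lemma ff_top: "ff t (hgt t) = t"
  using ff_props[of t "hgt t"] ff_le[of t t "hgt t"] dd_top by simp

lemma ff_glm: "glm (ff t (dd t))"
  unfolding glm_def
proof (intro allI impI)
  fix j assume "ff t (dd t) \<le> j"
  then have "t \<le> j" using ff_props[of t "dd t"] by simp
  then show "hgt (ff t (dd t)) \<le> hgt j" using ff_hgt[OF order.refl dd_top] dd_le by simp
qed

lemma prefix_take: "take m (stk j) = take m (stk a) \<Longrightarrow> hgt a = m \<Longrightarrow> prefix (stk a) (stk j)"
proof -
  assume a: "take m (stk j) = take m (stk a)" "hgt a = m"
  then have "take m (stk j) = stk a" by (simp add: hgt_def)
  then show ?thesis by (metis take_is_prefix)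
qed

definition "dp a b \<longleftrightarrow> a < b \<and> (\<forall>j. a \<le> j \<and> j < b \<longrightarrow> hgt a \<le> hgt j) \<and> hgt b + 1 = hgt a"
definition "dtype a b = (st a, last (stk a), last (butlast (stk a)), st b)"

lemma ff_dp: assumes "dd t \<le> l" "l < hgt t" shows "dp (ff t (Suc l)) (ff t l)"
proof -
  have h1: "hgt (ff t (Suc l)) = Suc l" using ff_hgt assms by simp
  have h2: "hgt (ff t l) = l" using ff_hgt assms by simp
  have le: "ff t (Suc l) \<le> ff t l" using ff_props[OF assms(1)] by (intro ff_le) auto
  have "ff t (Suc l) \<noteq> ff t l" using h1 h2 by auto
  then have lt: "ff t (Suc l) < ff t l" using le by simp
  have "\<forall>j. ff t (Suc l) \<le> j \<and> j < ff t l \<longrightarrow> hgt (ff t (Suc l)) \<le> hgt j"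
  proof (intro allI impI)
    fix j assume j: "ff t (Suc l) \<le> j \<and> j < ff t l"
    have "t \<le> j" using j ff_props[of t "Suc l"] assms by simp
    then have "l < hgt j" using ff_before[of t j l] j by simp
    then show "hgt (ff t (Suc l)) \<le> hgt j" using h1 by simp
  qed
  then show ?thesis using lt h1 h2 by (simp add: dp_def)
qed

lemma dp_hgt: "dp a b \<Longrightarrow> 2 \<le> hgt a"
  using hgt_pos[of b] by (simp add: dp_def)

lemma dtype_in: "dp a b \<Longrightarrow> dtype a b \<in> Q \<times> \<Gamma> \<times> \<Gamma> \<times> Q"
proof -
  assume d: "dp a b"
  have "butlast (stk a) \<noteq> []"
  proof
    assume "butlast (stk a) = []"
    then have "length (stk a) - 1 = 0" by (metis length_butlast list.size(3))
    then show False using dp_hgt[OF d] by (simp add: hgt_def)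
  qed
  then have "last (butlast (stk a)) \<in> set (stk a)"
    using in_set_butlastD last_in_set by metis
  then have "last (butlast (stk a)) \<in> \<Gamma>"
    using invar[of a] by blast
  then show ?thesis using st_Q last_G by (simp add: dtype_def)
qed

end

locale pi_ng = pi +
  fixes w :: "_ \<Rightarrow> int"
  assumes ng: "\<And>P Cy. vpath E (c 0) (P@Cy) \<Longrightarrow> \<not> lgc E w (run P (c 0)) Cy"
begin

abbreviation "pw j \<equiv> pweight w e j"

lemma cyc_seg:
  assumes "a \<le> b" "\<forall>j. a \<le> j \<and> j \<le> b \<longrightarrow> prefix (stk a) (stk j)" "st a = st b" "last (stk a) = last (stk b)"
  shows "pw b \<le> pw a"
proof (rule ccontr)
  assume neg: "\<not> pw b \<le> pw a"
  define P where "P = map e [0..<a]"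
  define Cy where "Cy = map e [a..<b]"
  have "P @ Cy = map e [0..<b]" using assms(1) upt_add_eq_append[of 0 a "b-a"] by (simp add: P_def Cy_def)
  then have vp: "vpath E (c 0) (P@Cy)" using seg2[of 0 b] by simp
  have rP: "run P (c 0) = c a" using seg2[of 0 a] by (simp add: P_def)
  have "lgc E w (c a) Cy"
    unfolding lgc_def using seg2[OF assms(1)] seg_based[OF assms(1,2)] sum_seg[OF assms(1), of w] neg assms(3,4)
    by (simp add: Cy_def stk_def st_def)
  then show False using ng[OF vp] rP by simp
qed

definition "dw \<tau> = (if \<exists>a b. dp a b \<and> dtype a b = \<tau> then
    (case (SOME (a,b). dp a b \<and> dtype a b = \<tau>) of (a,b) \<Rightarrow> pw b - pw a) else 0)"
definition "Kd = (\<Sum>\<tau>\<in>Q\<times>\<Gamma>\<times>\<Gamma>\<times>Q. \<bar>dw \<tau>\<bar>)"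

lemma Kd_nonneg: "0 \<le> Kd" unfolding Kd_def by (simp add: sum_nonneg)

lemma fin4: "finite (Q\<times>\<Gamma>\<times>\<Gamma>\<times>Q)" using fQ fG by simp

lemma drep_use:
  assumes d: "dp a b" and bne: "\<beta> \<noteq> []" and lb: "last \<beta> = last (butlast (stk a))"
  shows "\<exists>xs. vpath E (\<beta>@[last (stk a)], st a) xs \<and> based \<beta> (\<beta>@[last (stk a)], st a) xs \<and>
     run xs (\<beta>@[last (stk a)], st a) = (\<beta>, st b) \<and> -Kd \<le> sum_list (map w xs)"
proof -
  define \<tau> where "\<tau> = dtype a b"
  have ex: "\<exists>p. (case p of (a,b) \<Rightarrow> dp a b \<and> dtype a b = \<tau>)" using d by (auto simp: \<tau>_def)
  obtain a' b' where ab: "(SOME p. case p of (a,b) \<Rightarrow> dp a b \<and> dtype a b = \<tau>) = (a',b')" by fastforce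
  have d': "dp a' b'" and ty: "dtype a' b' = \<tau>" using someI_ex[OF ex] ab by auto
  have dw: "dw \<tau> = pw b' - pw a'" unfolding dw_def using d ab by (auto simp: \<tau>_def)
  define xs where "xs = map e [a'..<b']"
  define \<alpha>0 where "\<alpha>0 = butlast (stk a')"
  have lt: "a' < b'" and hb: "hgt b' + 1 = hgt a'" and hj: "\<forall>j. a' \<le> j \<and> j < b' \<longrightarrow> hgt a' \<le> hgt j"
    using d' by (auto simp: dp_def)
  have sa: "stk a' = \<alpha>0 @ [last (stk a')]" using ne[of a'] by (simp add: \<alpha>0_def)
  have "length \<alpha>0 = hgt a' - 1" by (simp add: \<alpha>0_def hgt_def)
  then have a0ne: "\<alpha>0 \<noteq> []" using dp_hgt[OF d'] by auto
  have tp: "\<forall>j. a' \<le> j \<and> j \<le> b' \<longrightarrow> take (hgt a' - 1) (stk j) = \<alpha>0"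
  proof (intro allI impI)
    fix j assume j: "a' \<le> j \<and> j \<le> b'"
    have m: "\<forall>i. a' \<le> i \<and> i \<le> j \<longrightarrow> hgt a' - 1 \<le> hgt i"
    proof (intro allI impI)
      fix i assume i: "a' \<le> i \<and> i \<le> j"
      show "hgt a' - 1 \<le> hgt i"
      proof (cases "i < b'")
        case True then show ?thesis using hj i by fastforce
      next
        case False then have "i = b'" using i j by simp
        then show ?thesis using hb by simp
      qed
    qed
    have "take (hgt a' - 1) (stk j) = take (hgt a' - 1) (stk a')"
      using j m by (intro take_pres) auto
    also have "\<dots> = \<alpha>0" by (simp add: \<alpha>0_def butlast_conv_take hgt_def)
    finally show "take (hgt a' - 1) (stk j) = \<alpha>0" .
  qed
  have pj: "\<forall>j. a' \<le> j \<and> j \<le> b' \<longrightarrow> prefix \<alpha>0 (stk j)"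
  proof (intro allI impI)
    fix j assume "a' \<le> j \<and> j \<le> b'"
    then have "take (hgt a' - 1) (stk j) = \<alpha>0" using tp by blast
    then show "prefix \<alpha>0 (stk j)" by (metis take_is_prefix)
  qed
  have bs: "based \<alpha>0 (c a') xs"
    unfolding xs_def using lt pj by (intro seg_based) auto
  have sb: "stk b' = \<alpha>0"
  proof -
    have "take (hgt a' - 1) (stk b') = \<alpha>0" using tp lt by simp
    moreover have "length (stk b') = hgt a' - 1" using hb by (simp add: hgt_def)
    ultimately show ?thesis by simp
  qed
  have ca: "c a' = (\<alpha>0 @ [last (stk a')], st a')"
  proof -
    have "c a' = (stk a', st a')" by (rule c_eq)
    then show ?thesis using sa by simp
  qed
  have lb': "last \<beta> = last \<alpha>0" using lb ty by (simp add: \<tau>_def dtype_def \<alpha>0_def)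
  have vx: "vpath E (\<alpha>0 @ [last (stk a')], st a') xs" using seg2(1)[of a' b'] lt ca by (simp add: xs_def)
  have bx: "based \<alpha>0 (\<alpha>0 @ [last (stk a')], st a') xs" using bs ca by simp
  have R: "vpath E (\<beta> @ [last (stk a')], st a') xs \<and> based \<beta> (\<beta> @ [last (stk a')], st a') xs \<and>
     (\<exists>v. fst (run xs (\<alpha>0 @ [last (stk a')], st a')) = \<alpha>0 @ v \<and>
          run xs (\<beta> @ [last (stk a')], st a') = (\<beta> @ v, snd (run xs (\<alpha>0 @ [last (stk a')], st a'))))"
    by (rule replay[OF vx bx a0ne bne lb'])
  have rn: "run xs (\<alpha>0 @ [last (stk a')], st a') = c b'"
    using seg2(2)[of a' b'] lt ca by (simp add: xs_def)
  obtain v where v: "fst (c b') = \<alpha>0 @ v" "run xs (\<beta> @ [last (stk a')], st a') = (\<beta> @ v, st b')"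
    using R rn by (auto simp: st_def)
  have "v = []" using v(1) sb by (simp add: stk_def)
  moreover have "last (stk a') = last (stk a)" "st a' = st a" "st b' = st b" using ty by (auto simp: \<tau>_def dtype_def)
  moreover have "sum_list (map w xs) = dw \<tau>" using sum_seg[of a' b' w] lt dw by (simp add: xs_def)
  moreover have "\<bar>dw \<tau>\<bar> \<le> Kd" unfolding Kd_def using dtype_in[OF d] fin4
    by (intro member_le_sum) (auto simp: \<tau>_def)
  ultimately show ?thesis using R v by (intro exI[of _ xs]) auto
qed

end

context pi_ng
begin

definition "rp Ls a b \<longleftrightarrow> a \<le> b \<and> glm a \<and> lab b = Ls"
definition "rw Ls L = (if \<exists>a b. rp Ls a b \<and> lab a = L then
    (case (SOME (a,b). rp Ls a b \<and> lab a = L) of (a,b) \<Rightarrow> pw b - pw a) else 0)"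
definition "Kr Ls = (\<Sum>L\<in>Q\<times>\<Gamma>. \<bar>rw Ls L\<bar>)"

lemma Kr_nonneg: "0 \<le> Kr Ls" unfolding Kr_def by (simp add: sum_nonneg)

lemma rrep_use:
  assumes d: "rp Ls a b" and bne: "\<beta> \<noteq> []" and lb: "last \<beta> = last (stk a)"
  shows "\<exists>xs. vpath E (\<beta>, st a) xs \<and> based \<beta> (\<beta>, st a) xs \<and> snd (run xs (\<beta>, st a)) = fst Ls \<and>
     last (fst (run xs (\<beta>, st a))) = snd Ls \<and> -Kr Ls \<le> sum_list (map w xs)"
proof -
  define \<tau> where "\<tau> = lab a"
  have ex: "\<exists>p. (case p of (a,b) \<Rightarrow> rp Ls a b \<and> lab a = \<tau>)" using d by (auto simp: \<tau>_def)
  obtain a' b' where ab: "(SOME p. case p of (a,b) \<Rightarrow> rp Ls a b \<and> lab a = \<tau>) = (a',b')" by fastforce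
  have d': "rp Ls a' b'" and ty: "lab a' = \<tau>" using someI_ex[OF ex] ab by auto
  have rw: "rw Ls \<tau> = pw b' - pw a'" unfolding rw_def using d ab by (auto simp: \<tau>_def)
  define xs where "xs = map e [a'..<b']"
  define \<alpha>0 where "\<alpha>0 = stk a'"
  have lt: "a' \<le> b'" and gl: "glm a'" and lbb: "lab b' = Ls" using d' by (auto simp: rp_def)
  have pj: "\<forall>j. a' \<le> j \<and> j \<le> b' \<longrightarrow> prefix \<alpha>0 (stk j)" using glm_prefix[OF gl] by (simp add: \<alpha>0_def)
  have bs: "based \<alpha>0 (c a') xs" unfolding xs_def using lt pj by (intro seg_based) auto
  have ca: "c a' = (\<alpha>0 @ [], st a')" using c_eq by (simp add: \<alpha>0_def)
  have a0ne: "\<alpha>0 \<noteq> []" using ne by (simp add: \<alpha>0_def)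
  have sa: "st a' = st a" "last (stk a') = last (stk a)" using ty by (auto simp: \<tau>_def lab_def)
  have lb': "last \<beta> = last \<alpha>0" using lb sa by (simp add: \<alpha>0_def)
  have vx: "vpath E (\<alpha>0 @ [], st a') xs" using seg2(1)[of a' b'] lt ca by (simp add: xs_def)
  have bx: "based \<alpha>0 (\<alpha>0 @ [], st a') xs" using bs ca by simp
  have R: "vpath E (\<beta> @ [], st a') xs \<and> based \<beta> (\<beta> @ [], st a') xs \<and>
     (\<exists>v. fst (run xs (\<alpha>0 @ [], st a')) = \<alpha>0 @ v \<and>
          run xs (\<beta> @ [], st a') = (\<beta> @ v, snd (run xs (\<alpha>0 @ [], st a'))))"
    by (rule replay[OF vx bx a0ne bne lb'])
  have rn: "run xs (\<alpha>0 @ [], st a') = c b'" using seg2(2)[of a' b'] lt ca by (simp add: xs_def)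
  obtain v where v: "stk b' = \<alpha>0 @ v" "run xs (\<beta>, st a') = (\<beta> @ v, st b')"
    using R rn by (auto simp: st_def stk_def)
  have "last (\<beta> @ v) = last (\<alpha>0 @ v)" using last_app_eq[OF a0ne bne lb'] .
  then have l1: "last (\<beta> @ v) = snd Ls" using v(1) lbb unfolding lab_def by (metis snd_conv)
  have s1: "st b' = fst Ls" using lbb by (auto simp: lab_def)
  have "sum_list (map w xs) = rw Ls \<tau>" using sum_seg[of a' b' w] lt rw by (simp add: xs_def)
  moreover have "\<bar>rw Ls \<tau>\<bar> \<le> Kr Ls" unfolding Kr_def using lab_QG[of a] fQ fG
    by (intro member_le_sum) (auto simp: \<tau>_def)
  ultimately show ?thesis using R v l1 s1 sa by (intro exI[of _ xs]) auto
qed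

lemma N1:
  assumes "1 \<le> l" "l \<le> l'" "l' \<le> hgt t" "st (kk t l) = st (kk t l')"
    "last (stk (kk t l)) = last (stk (kk t l'))"
  shows "pw (kk t l') \<le> pw (kk t l)"
proof (rule cyc_seg)
  show ab: "kk t l \<le> kk t l'" using kk_mono assms by simp
  have lt: "l \<le> hgt t" using assms by simp
  have kt: "kk t l' \<le> t" using kk_props[of l' t] assms by simp
  show "\<forall>j. kk t l \<le> j \<and> j \<le> kk t l' \<longrightarrow> prefix (stk (kk t l)) (stk j)"
  proof (intro allI impI)
    fix j assume j: "kk t l \<le> j \<and> j \<le> kk t l'"
    have "take l (stk j) = take l (stk (kk t l))"
      using j kt kk_above[OF assms(1) lt] by (intro take_pres) auto
    then show "prefix (stk (kk t l)) (stk j)" using kk_hgt[OF assms(1) lt] prefix_take by blast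
  qed
qed (use assms in auto)

definition "T t l = (st (kk t l), last (stk (kk t l)), st (ff t l))"

lemma claim:
  assumes "dd t \<le> cc" "cc \<le> hgt t" "snd z = st (kk t cc)" "fst z \<noteq> []" "last (fst z) = last (stk (kk t cc))"
  shows "\<exists>xs. vpath E z xs \<and> based (fst z) z xs \<and> run xs z = (fst z, st (ff t cc)) \<and>
     pw t - pw (kk t cc) - Kd * int (card (T t ` {cc..hgt t})) \<le> sum_list (map w xs)"
  using assms
proof (induction "hgt t - cc" arbitrary: cc z rule: less_induct)
  case less
  define c' where "c' = (GREATEST l. l \<le> hgt t \<and> cc \<le> l \<and> T t l = T t cc)"
  have c'p: "c' \<le> hgt t \<and> cc \<le> c' \<and> T t c' = T t cc"
    unfolding c'_def by (rule GreatestI_nat[of _ cc "hgt t"]) (use less.prems in auto)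
  have c'max: "\<And>l. c' < l \<Longrightarrow> l \<le> hgt t \<Longrightarrow> T t l \<noteq> T t cc"
  proof -
    fix l assume l: "c' < l" "l \<le> hgt t"
    show "T t l \<noteq> T t cc"
    proof
      assume "T t l = T t cc"
      then have "l \<le> c'" unfolding c'_def using l c'p by (intro Greatest_le_nat[of _ l "hgt t"]) auto
      then show False using l by simp
    qed
  qed
  have cc1: "1 \<le> cc" using dd_pos less.prems(1) order_trans by blast
  have Teq: "st (kk t cc) = st (kk t c')" "last (stk (kk t cc)) = last (stk (kk t c'))"
     "st (ff t cc) = st (ff t c')" using c'p by (auto simp: T_def)
  have fin: "finite (T t ` {cc..hgt t})" by simp
  have card1: "1 \<le> card (T t ` {cc..hgt t})"
    using less.prems(2) fin by (metis One_nat_def Suc_leI atLeastAtMost_iff card_gt_0_iff empty_iff image_is_empty order_refl)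
  show ?case
  proof (cases "c' = hgt t")
    case True
    have s1: "st (kk t cc) = st t" using Teq(1) True kk_top by simp
    have s2: "st (ff t cc) = st t" using Teq(3) True ff_top by simp
    have "pw t \<le> pw (kk t cc)"
      using N1[of cc c' t] cc1 c'p Teq True kk_top by simp
    moreover have "0 \<le> Kd * int (card (T t ` {cc..hgt t}))" using Kd_nonneg by simp
    ultimately show ?thesis using s1 s2 less.prems(3)
      by (intro exI[of _ "[]"]) (auto simp: prod_eq_iff)
  next
    case False
    then have c'lt: "c' < hgt t" using c'p by simp
    define l1 where "l1 = Suc c'"
    have c'1: "1 \<le> c'" using cc1 c'p by simp
    have ddc': "dd t \<le> c'" using less.prems(1) c'p by simp
    have l1le: "l1 \<le> hgt t" using c'lt by (simp add: l1_def)
    have kmono: "kk t c' \<le> kk t l1" using kk_mono c'1 by (simp add: l1_def)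
    have kt: "kk t l1 \<le> t" using kk_props[of l1 t] by (simp add: l1_def)
    define asc where "asc = map e [kk t c'..<kk t l1]"
    define \<alpha>0 where "\<alpha>0 = stk (kk t c')"
    have pj: "\<forall>j. kk t c' \<le> j \<and> j \<le> kk t l1 \<longrightarrow> prefix \<alpha>0 (stk j)"
    proof (intro allI impI)
      fix j assume j: "kk t c' \<le> j \<and> j \<le> kk t l1"
      have "take c' (stk j) = take c' (stk (kk t c'))"
        using j kt kk_above[OF c'1 less_imp_le[OF c'lt]] by (intro take_pres) auto
      then show "prefix \<alpha>0 (stk j)" using kk_hgt[OF c'1 less_imp_le[OF c'lt]] prefix_take
        by (simp add: \<alpha>0_def)
    qed
    have ca: "c (kk t c') = (\<alpha>0 @ [], st (kk t c'))" using c_eq by (simp add: \<alpha>0_def)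
    have vx: "vpath E (\<alpha>0 @ [], st (kk t c')) asc" using seg2(1)[OF kmono] ca by (simp add: asc_def)
    have bx: "based \<alpha>0 (\<alpha>0 @ [], st (kk t c')) asc"
      using seg_based[OF kmono pj] ca by (simp add: asc_def)
    have a0ne: "\<alpha>0 \<noteq> []" using ne by (simp add: \<alpha>0_def)
    have lb': "last (fst z) = last \<alpha>0" using less.prems(5) Teq by (simp add: \<alpha>0_def)
    have R: "vpath E (fst z @ [], st (kk t c')) asc \<and> based (fst z) (fst z @ [], st (kk t c')) asc \<and>
     (\<exists>v. fst (run asc (\<alpha>0 @ [], st (kk t c'))) = \<alpha>0 @ v \<and>
          run asc (fst z @ [], st (kk t c')) = (fst z @ v, snd (run asc (\<alpha>0 @ [], st (kk t c')))))"
      by (rule replay[OF vx bx a0ne less.prems(4) lb'])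
    have rn: "run asc (\<alpha>0 @ [], st (kk t c')) = c (kk t l1)" using seg2(2)[OF kmono] ca by (simp add: asc_def)
    have zeq: "z = (fst z, st (kk t c'))" using less.prems(3) Teq by (simp add: prod_eq_iff)
    obtain v where v: "stk (kk t l1) = \<alpha>0 @ v" "run asc z = (fst z @ v, st (kk t l1))"
      using R rn zeq by (auto simp: st_def stk_def)
    have sk1: "stk (kk t l1) = take l1 (stk t)" using kk_stk[of l1 t] l1le by (simp add: l1_def)
    have sk0: "\<alpha>0 = take c' (stk t)" using kk_stk[OF c'1 less_imp_le[OF c'lt]] by (simp add: \<alpha>0_def)
    have lenv: "length v = 1"
    proof -
      have "length (stk (kk t l1)) = l1" using sk1 l1le by (simp add: hgt_def min_def)
      moreover have "length \<alpha>0 = c'" using sk0 c'lt by (simp add: hgt_def min_def)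
      ultimately show ?thesis using v(1) by (simp add: l1_def)
    qed
    then obtain \<gamma> where g: "v = [\<gamma>]" by (cases v) auto
    have lastk1: "last (stk (kk t l1)) = \<gamma>" using v(1) g by simp
    define z' where "z' = (fst z @ v, st (kk t l1))"
    have IH: "\<exists>xs. vpath E z' xs \<and> based (fst z') z' xs \<and> run xs z' = (fst z', st (ff t l1)) \<and>
     pw t - pw (kk t l1) - Kd * int (card (T t ` {l1..hgt t})) \<le> sum_list (map w xs)"
    proof -
      have m: "hgt t - l1 < hgt t - cc" using c'lt c'p unfolding l1_def by linarith
      have d1: "dd t \<le> l1" using less.prems(1) c'p by (simp add: l1_def)
      have "snd z' = st (kk t l1)" "fst z' \<noteq> []" "last (fst z') = last (stk (kk t l1))"
        using lastk1 g by (auto simp: z'_def)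
      then show ?thesis using less.hyps[OF m d1 l1le] by blast
    qed
    then obtain xs' where xs': "vpath E z' xs'" "based (fst z') z' xs'" "run xs' z' = (fst z', st (ff t l1))"
      "pw t - pw (kk t l1) - Kd * int (card (T t ` {l1..hgt t})) \<le> sum_list (map w xs')" by blast
    have dpp: "dp (ff t l1) (ff t c')" using ff_dp[OF ddc' c'lt] by (simp add: l1_def)
    have sf1: "stk (ff t l1) = stk (kk t l1)" using ff_stk[of t l1] kk_stk[of l1 t] less.prems(1) c'p l1le
      by (simp add: l1_def)
    have lf1: "last (stk (ff t l1)) = \<gamma>" using sf1 lastk1 by simp
    have bf1: "butlast (stk (ff t l1)) = \<alpha>0" using sf1 v(1) g by simp
    have lb2: "last (fst z) = last (butlast (stk (ff t l1)))" using bf1 lb' by simp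
    obtain xs'' where xs'': "vpath E (fst z @ [last (stk (ff t l1))], st (ff t l1)) xs''"
      "based (fst z) (fst z @ [last (stk (ff t l1))], st (ff t l1)) xs''"
      "run xs'' (fst z @ [last (stk (ff t l1))], st (ff t l1)) = (fst z, st (ff t c'))"
      "-Kd \<le> sum_list (map w xs'')"
      using drep_use[OF dpp less.prems(4) lb2] by blast
    have r': "run xs' z' = (fst z @ [last (stk (ff t l1))], st (ff t l1))" using xs'(3) lf1 g by (simp add: z'_def)
    have az: "run asc z = z'" using v(2) by (simp add: z'_def)
    have vasc: "vpath E z asc" using R zeq by (metis append_Nil2)
    have basc: "based (fst z) z asc" using R zeq by (metis append_Nil2)
    have bxs': "based (fst z) z' xs'" using xs'(2) by (rule based_mono[rotated]) (simp add: z'_def)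
    have wasc: "sum_list (map w asc) = pw (kk t l1) - pw (kk t c')" using sum_seg[OF kmono, of w] by (simp add: asc_def)
    have n1: "pw (kk t c') \<le> pw (kk t cc)" using N1[of cc c' t] cc1 c'p Teq by simp
    have sub: "T t ` {l1..hgt t} \<subseteq> T t ` {cc..hgt t} - {T t cc}"
    proof
      fix x assume "x \<in> T t ` {l1..hgt t}"
      then obtain l where l: "l \<in> {l1..hgt t}" "x = T t l" by blast
      have "T t l \<noteq> T t cc" using c'max[of l] l by (simp add: l1_def)
      moreover have "l \<in> {cc..hgt t}" using l c'p by (simp add: l1_def)
      ultimately show "x \<in> T t ` {cc..hgt t} - {T t cc}" using l by (simp add: image_iff) (metis atLeastAtMost_iff)
    qed
    have "card (T t ` {l1..hgt t}) \<le> card (T t ` {cc..hgt t} - {T t cc})"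
      by (rule card_mono[OF _ sub]) simp
    also have "\<dots> = card (T t ` {cc..hgt t}) - 1" using c'p less.prems(2) by (subst card_Diff_singleton) auto
    finally have cd: "card (T t ` {l1..hgt t}) + 1 \<le> card (T t ` {cc..hgt t})" using card1 by simp
    have "Kd * int (card (T t ` {l1..hgt t})) + Kd \<le> Kd * int (card (T t ` {cc..hgt t}))"
    proof -
      have "Kd * int (card (T t ` {l1..hgt t}) + 1) \<le> Kd * int (card (T t ` {cc..hgt t}))"
        using cd Kd_nonneg by (intro mult_left_mono) auto
      then show ?thesis by (simp add: algebra_simps)
    qed
    then have wt: "pw t - pw (kk t cc) - Kd * int (card (T t ` {cc..hgt t})) \<le>
       sum_list (map w asc) + sum_list (map w xs') + sum_list (map w xs'')"
      using wasc xs'(4) xs''(4) n1 by linarith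
    show ?thesis
    proof (intro exI[of _ "asc @ xs' @ xs''"] conjI)
      show "vpath E z (asc @ xs' @ xs'')" using vasc az xs'(1) r' xs''(1) by simp
      show "based (fst z) z (asc @ xs' @ xs'')" using basc az bxs' r' xs''(2) by simp
      show "run (asc @ xs' @ xs'') z = (fst z, st (ff t cc))" using az r' xs''(3) Teq by simp
      show "pw t - pw (kk t cc) - Kd * int (card (T t ` {cc..hgt t})) \<le> sum_list (map w (asc @ xs' @ xs''))"
        using wt by simp
    qed
  qed
qed

end

context pi_ng
begin

lemma glm_inf: "infinite {g. glm g}"
  by (simp add: infinite_nat_iff_unbounded_le ex_glm)

lemma bound_after:
  assumes gl: "glm ga" and inf: "infinite {g. glm g \<and> lab g = lab ga}" and tge: "ga \<le> t"
  shows "pw t \<le> pw ga + Kd * int (card (Q\<times>\<Gamma>\<times>Q)) + Kr (lab ga)"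
proof (rule ccontr)
  assume neg: "\<not> ?thesis"
  define Ls where "Ls = lab ga"
  define d where "d = dd t"
  have d1: "1 \<le> d" "d \<le> hgt t" using dd_pos dd_top by (auto simp: d_def)
  define k where "k = kk t d"
  define f where "f = ff t d"
  have sk: "stk k = take d (stk t)" using kk_stk d1 by (simp add: k_def)
  have sf: "stk f = take d (stk t)" using ff_stk[of t d] d1 by (simp add: f_def d_def)
  have fge: "t \<le> f" using ff_props[of t d] by (simp add: f_def d_def)
  have hf: "hgt f = d" using ff_hgt[of t d] d1 by (simp add: f_def d_def)
  have glf: "glm f" using ff_glm by (simp add: f_def d_def)
  have kge: "ga \<le> k"
  proof -
    have "hgt ga \<le> hgt f" using gl fge tge by (simp add: glm_def)
    then show ?thesis using kk_ge[of d ga t] d1 tge hf by (simp add: k_def)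
  qed
  have kt: "k \<le> t" using kk_props[of d t] d1 by (simp add: k_def)
  obtain es where es: "vpath E (c k) es" "based (stk k) (c k) es" "run es (c k) = (stk k, st f)"
    "pw t - pw k - Kd * int (card (T t ` {d..hgt t})) \<le> sum_list (map w es)"
  proof -
    have a1: "dd t \<le> d" "d \<le> hgt t" using d1 by (simp_all add: d_def)
    have a2: "snd (c k) = st (kk t d)" "fst (c k) \<noteq> []" "last (fst (c k)) = last (stk (kk t d))"
      using ne[of k] by (simp_all add: k_def st_def stk_def)
    have fk: "fst (c k) = stk k" by (simp add: stk_def)
    obtain xs where xs: "vpath E (c k) xs" "based (fst (c k)) (c k) xs" "run xs (c k) = (fst (c k), st (ff t d))"
      "pw t - pw (kk t d) - Kd * int (card (T t ` {d..hgt t})) \<le> sum_list (map w xs)"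
      using claim[OF a1 a2] by blast
    show ?thesis
    proof (rule that[of xs])
      show "vpath E (c k) xs" by (rule xs(1))
      show "based (stk k) (c k) xs" using xs(2) fk by simp
      show "run xs (c k) = (stk k, st f)" using xs(3) fk unfolding f_def by simp
      show "pw t - pw k - Kd * int (card (T t ` {d..hgt t})) \<le> sum_list (map w xs)"
        using xs(4) unfolding k_def .
    qed
  qed
  obtain gb where gb: "f \<le> gb" "glm gb" "lab gb = Ls"
  proof -
    have "\<forall>m. \<exists>n\<ge>m. n \<in> {g. glm g \<and> lab g = lab ga}" by (rule iffD1[OF infinite_nat_iff_unbounded_le inf])
    then obtain n where n: "n \<ge> f" "n \<in> {g. glm g \<and> lab g = lab ga}" by blast
    show ?thesis by (rule that[of n]) (use n in \<open>auto simp: Ls_def\<close>)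
  qed
  have rp: "rp Ls f gb" using gb glf by (simp add: rp_def)
  obtain xs2 where xs2: "vpath E (stk k, st f) xs2" "based (stk k) (stk k, st f) xs2"
     "snd (run xs2 (stk k, st f)) = fst Ls" "last (fst (run xs2 (stk k, st f))) = snd Ls"
     "-Kr Ls \<le> sum_list (map w xs2)"
  proof -
    have "last (stk k) = last (stk f)" using sk sf by simp
    then show ?thesis using rrep_use[OF rp ne[of k]] that by blast
  qed
  define P where "P = map e [0..<ga]"
  define A where "A = map e [ga..<k]"
  define Cy where "Cy = A @ es @ xs2"
  have PA: "P @ A = map e [0..<k]" using kge upt_add_eq_append[of 0 ga "k-ga"] by (simp add: P_def A_def)
  have rP: "run P (c 0) = c ga" using seg2(2)[of 0 ga] by (simp add: P_def)
  have rA: "run A (c ga) = c k" using seg2(2)[OF kge] by (simp add: A_def)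
  have vA: "vpath E (c ga) A" using seg2(1)[OF kge] by (simp add: A_def)
  have vP: "vpath E (c 0) P" using seg2(1)[of 0 ga] by (simp add: P_def)
  have vp: "vpath E (c 0) (P @ Cy)"
  proof -
    have v1: "vpath E (c k) (es @ xs2)" unfolding vpath_append using es(1,3) xs2(1) by simp
    have v2: "vpath E (c ga) (A @ es @ xs2)" unfolding vpath_append[of E _ A] using vA rA v1 by simp
    show ?thesis unfolding vpath_append[of E _ P] Cy_def using vP rP v2 by simp
  qed
  have pk: "prefix (stk ga) (stk k)" using glm_prefix[OF gl kge] .
  have bA: "based (stk ga) (c ga) A"
    unfolding A_def using kge by (intro seg_based) (simp_all add: glm_prefix[OF gl])
  have bCy: "based (stk ga) (c ga) Cy"
  proof -
    have b1: "based (stk ga) (c k) (es @ xs2)"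
      unfolding based_append using based_mono[OF pk es(2)] es(3) based_mono[OF pk xs2(2)] by simp
    show ?thesis unfolding Cy_def based_append[of _ _ A] using bA rA b1 by simp
  qed
  have rCy: "run Cy (c ga) = run xs2 (stk k, st f)" using rA es(3) by (simp add: Cy_def)
  have cdb: "card (T t ` {d..hgt t}) \<le> card (Q\<times>\<Gamma>\<times>Q)"
  proof (rule card_mono)
    show "finite (Q\<times>\<Gamma>\<times>Q)" using fQ fG by simp
    show "T t ` {d..hgt t} \<subseteq> Q\<times>\<Gamma>\<times>Q" using st_Q last_G by (auto simp: T_def)
  qed
  have "Kd * int (card (T t ` {d..hgt t})) \<le> Kd * int (card (Q\<times>\<Gamma>\<times>Q))"
    using cdb Kd_nonneg by (intro mult_left_mono) auto
  moreover have "sum_list (map w A) = pw k - pw ga" using sum_seg[OF kge, of w] by (simp add: A_def)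
  ultimately have pos: "0 < sum_list (map w Cy)"
    using neg es(4) xs2(5) unfolding Cy_def Ls_def by simp
  have vCy: "vpath E (c ga) Cy"
  proof -
    have v1: "vpath E (c k) (es @ xs2)" unfolding vpath_append using es(1,3) xs2(1) by simp
    show ?thesis unfolding vpath_append[of E _ A] Cy_def using vA rA v1 by simp
  qed
  have e1: "snd (run Cy (c ga)) = snd (c ga)" using rCy xs2(3) by (simp add: Ls_def lab_def st_def)
  have e2: "last (fst (run Cy (c ga))) = last (fst (c ga))" using rCy xs2(4) by (simp add: Ls_def lab_def stk_def)
  have bCy': "based (fst (c ga)) (c ga) Cy" using bCy by (simp add: stk_def)
  have "lgc E w (c ga) Cy" unfolding lgc_def using vCy pos bCy' e1 e2 by blast
  then show False using ng[OF vp] rP by simp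
qed

lemma bounded: "\<exists>B. \<forall>t. pw t \<le> B"
proof -
  have sub: "lab ` {g. glm g} \<subseteq> Q\<times>\<Gamma>" using lab_QG by blast
  have fin: "finite (lab ` {g. glm g})" using finite_subset[OF sub] fQ fG by simp
  obtain ga where ga: "glm ga" "infinite {g \<in> {g. glm g}. lab g = lab ga}"
  proof -
    obtain ga where "ga \<in> {g. glm g}" "\<not> finite {g \<in> {g. glm g}. lab g = lab ga}"
      using pigeonhole_infinite[OF glm_inf fin] by (rule bexE)
    then show ?thesis using that by simp
  qed
  define B where "B = max (pw ga + Kd * int (card (Q\<times>\<Gamma>\<times>Q)) + Kr (lab ga)) (Max (pw ` {..ga}))"
  have "pw t \<le> B" for t
  proof (cases "ga \<le> t")
    case True
    then show ?thesis using bound_after[OF ga(1) _ True] ga(2) by (simp add: B_def)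
  next
    case False
    then have "pw t \<le> Max (pw ` {..ga})" by (intro Max_ge) auto
    then show ?thesis by (simp add: B_def)
  qed
  then show ?thesis by blast
qed

end

lemma sum_list_map_nth: "sum_list (map w xs) = (\<Sum>k<length xs. w (xs ! k))"
  by (induction xs rule: rev_induct) (auto simp: nth_append)

lemma conv_good:
  assumes vp: "vpath E z0 (P@Cy)" and g: "lgc E w (run P z0) Cy"
  shows "\<exists>c e n i j. c 0 = z0 \<and> fin_path E c e n \<and> i \<le> j \<and> j \<le> n \<and>
             good_cycle E w (\<lambda>k. c (i + k)) (\<lambda>k. e (i + k)) (j - i)"
proof -
  define xs where "xs = P @ Cy"
  define c' where "c' = (\<lambda>k. run (take k xs) z0)"
  define e' where "e' = (\<lambda>k. xs ! k)"
  define i where "i = length P"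
  define n where "n = length xs"
  have fp: "\<forall>k<n. step E (c' k) (e' k) (c' (Suc k))"
    using vpath_nth[of E z0 xs] vp by (simp add: c'_def e'_def n_def xs_def)
  have ci: "\<And>j. c' (i + j) = run (take j Cy) (run P z0)"
    by (simp add: c'_def xs_def i_def)
  have ni: "n - i = length Cy" by (simp add: n_def i_def xs_def)
  have sumeq: "pweight w (\<lambda>k. e' (i + k)) (n - i) = sum_list (map w Cy)"
    unfolding pweight_def ni sum_list_map_nth by (simp add: e'_def xs_def i_def)
  have "good_cycle E w (\<lambda>k. c' (i + k)) (\<lambda>k. e' (i + k)) (n - i)"
    unfolding good_cycle_def fin_path_def
  proof (intro conjI allI impI)
    fix k assume "k < n - i"
    then show "step E (c' (i + k)) (e' (i + k)) (c' (i + Suc k))" using fp by simp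
  next
    show "0 < pweight w (\<lambda>k. e' (i + k)) (n - i)" using sumeq g by (simp add: lgc_def)
  next
    fix j assume "j \<le> n - i"
    then show "prefix (fst (c' (i + 0))) (fst (c' (i + j)))"
      using g ci[of j] ci[of 0] ni by (simp add: lgc_def based_def)
  next
    show "snd (c' (i + 0)) = snd (c' (i + (n - i)))" using g ci[of 0] ci[of "n-i"] ni by (simp add: lgc_def)
  next
    show "last (fst (c' (i + 0))) = last (fst (c' (i + (n - i))))" using g ci[of 0] ci[of "n-i"] ni by (simp add: lgc_def)
  qed
  moreover have "c' 0 = z0" by (simp add: c'_def)
  moreover have "fin_path E c' e' n" using fp by (simp add: fin_path_def)
  moreover have "i \<le> n" by (simp add: i_def n_def xs_def)
  ultimately show ?thesis by blast
qed

lemma segf: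
  assumes "\<forall>k<m. step E (c (a+k)) (e (a+k)) (c (Suc (a+k)))"
  shows "vpath E (c a) (map e [a..<a+m]) \<and> run (map e [a..<a+m]) (c a) = c (a+m)"
  using assms
proof (induction m)
  case 0 then show ?case by simp
next
  case (Suc m)
  have "[a..<a+Suc m] = [a..<a+m] @ [a+m]" by simp
  moreover have s: "step E (c (a+m)) (e (a+m)) (c (Suc (a+m)))" using Suc.prems by simp
  moreover have n: "c (Suc (a+m)) = nxt (e (a+m)) (c (a+m))" by (rule step_nxt[OF s])
  moreover have "step E (c (a+m)) (e (a+m)) (nxt (e (a+m)) (c (a+m)))" using s n by simp
  moreover have "vpath E (c a) (map e [a..<a+m]) \<and> run (map e [a..<a+m]) (c a) = c (a+m)"
    using Suc.IH Suc.prems by simp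
  ultimately show ?case by simp
qed

lemma lists_of_good:
  assumes c0: "c 0 = z0" and fp: "fin_path E c e n" and ij: "i \<le> j" "j \<le> n"
    and g: "good_cycle E w (\<lambda>k. c (i + k)) (\<lambda>k. e (i + k)) (j - i)"
  shows "\<exists>P Cy. vpath E z0 (P@Cy) \<and> lgc E w (run P z0) Cy"
proof -
  define P where "P = map e [0..<i]"
  define Cy where "Cy = map e [i..<j]"
  have st: "\<forall>k. k < n \<longrightarrow> step E (c k) (e k) (c (Suc k))" using fp by (simp add: fin_path_def)
  have s0: "vpath E (c 0) (map e [0..<0+j]) \<and> run (map e [0..<0+j]) (c 0) = c (0+j)"
    by (rule segf) (use st ij in auto)
  have sP: "vpath E (c 0) (map e [0..<0+i]) \<and> run (map e [0..<0+i]) (c 0) = c (0+i)"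
    by (rule segf) (use st ij in auto)
  have sk: "\<And>k. k \<le> j - i \<Longrightarrow> vpath E (c i) (map e [i..<i+k]) \<and> run (map e [i..<i+k]) (c i) = c (i+k)"
    by (rule segf) (use st ij in auto)
  have PC: "P @ Cy = map e [0..<j]" using ij upt_add_eq_append[of 0 i "j-i"] by (simp add: P_def Cy_def)
  have rP: "run P z0 = c i" using sP c0 by (simp add: P_def)
  have Ceq: "Cy = map e [i..<i+(j-i)]" using ij by (simp add: Cy_def)
  have tk: "\<And>k. k \<le> j - i \<Longrightarrow> take k Cy = map e [i..<i+k]"
  proof -
    fix k assume "k \<le> j - i"
    then have "i + k \<le> j" using ij by simp
    then show "take k Cy = map e [i..<i+k]" by (simp add: Cy_def take_map take_upt)
  qed
  have gd: "pweight w (\<lambda>k. e (i + k)) (j - i) > 0" "\<forall>k\<le>j-i. prefix (fst (c i)) (fst (c (i+k)))"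
    "snd (c i) = snd (c (i + (j-i)))" "last (fst (c i)) = last (fst (c (i + (j-i))))"
    using g by (auto simp: good_cycle_def)
  have sw: "sum_list (map w Cy) = pweight w (\<lambda>k. e (i + k)) (j - i)"
    unfolding pweight_def sum_list_map_nth by (simp add: Cy_def add.commute)
  have "lgc E w (c i) Cy"
    unfolding lgc_def based_def
  proof (intro conjI allI impI)
    show "vpath E (c i) Cy" using sk[of "j-i"] Ceq by simp
    show "0 < sum_list (map w Cy)" using sw gd by simp
  next
    fix k assume "k \<le> length Cy"
    then have "k \<le> j - i" by (simp add: Cy_def)
    then show "prefix (fst (c i)) (fst (run (take k Cy) (c i)))" using sk[of k] tk[of k] gd(2) by simp
  next
    show "snd (run Cy (c i)) = snd (c i)" using sk[of "j-i"] Ceq gd(3) by simp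
    show "last (fst (run Cy (c i))) = last (fst (c i))" using sk[of "j-i"] Ceq gd(4) by simp
  qed
  then show ?thesis using s0 c0 PC rP by (intro exI[of _ P] exI[of _ Cy]) simp
qed

lemma limsup_bound:
  assumes "\<forall>t. pweight w e t \<le> B"
  shows "lim_sup_avg w e \<le> 0"
proof -
  define B' where "B' = max (real_of_int B) 0"
  have le: "\<forall>n. ereal (real_of_int (pweight w e n) / real n) \<le> ereal (B' / real n)"
  proof
    fix n
    show "ereal (real_of_int (pweight w e n) / real n) \<le> ereal (B' / real n)"
    proof (cases "n = 0")
      case True then show ?thesis by simp
    next
      case False
      have "real_of_int (pweight w e n) \<le> B'" using assms by (simp add: B'_def) (metis of_int_le_iff le_max_iff_disj)
      then show ?thesis using False by (simp add: divide_right_mono)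
    qed
  qed
  have lim: "(\<lambda>n. ereal (B' / real n)) \<longlonglongrightarrow> ereal 0"
    by (intro tendsto_ereal lim_const_over_n)
  have "limsup (\<lambda>n. ereal (B' / real n)) = 0"
    using lim_imp_Limsup[OF trivial_limit_sequentially lim] by (simp add: zero_ereal_def)
  moreover have "limsup (\<lambda>n. ereal (real_of_int (pweight w e n) / real n)) \<le> limsup (\<lambda>n. ereal (B' / real n))"
    by (rule Limsup_mono) (use le in auto)
  ultimately show ?thesis by (simp add: lim_sup_avg_def)
qed

lemma concat_rep_Suc: "concat (replicate (Suc m) xs) = concat (replicate m xs) @ xs"
  by (induction m) auto

lemma sum_rep: "sum_list (map w (concat (replicate m xs))) = int m * sum_list (map w xs)"
  by (induction m) (auto simp: algebra_simps)

lemma abs_sum_nonneg: "0 \<le> sum_list (map (\<lambda>x. \<bar>(w x::int)\<bar>) ys)"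
  by (induction ys) auto

lemma sum_take_ge: "- sum_list (map (\<lambda>x. \<bar>w x\<bar>) ys) \<le> sum_list (map (w::'a\<Rightarrow>int) (take r ys))"
proof (induction ys arbitrary: r)
  case Nil then show ?case by simp
next
  case (Cons y ys)
  show ?case
  proof (cases r)
    case 0 then show ?thesis using abs_sum_nonneg[of w ys] by simp
  next
    case (Suc r') then show ?thesis using Cons.IH[of r'] by simp
  qed
qed


lemma vpath_ne: "vpath E z (x#xs) \<Longrightarrow> fst z \<noteq> []"
  by (cases x) (simp add: step_def)

lemma rep_cycle:
  assumes g: "lgc E w (\<alpha>, q) Cy" and ane: "\<alpha> \<noteq> []"
  shows "\<beta> \<noteq> [] \<Longrightarrow> last \<beta> = last \<alpha> \<Longrightarrow> vpath E (\<beta>,q) (concat (replicate k Cy)) \<and>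
     (\<exists>V. run (concat (replicate k Cy)) (\<beta>,q) = (\<beta>@V, q) \<and> last (\<beta> @ V) = last \<alpha>)"
proof (induction k arbitrary: \<beta>)
  case 0 then show ?case by simp
next
  case (Suc k)
  have vx: "vpath E (\<alpha>@[], q) Cy" and bx: "based \<alpha> (\<alpha>@[], q) Cy"
    and sr: "snd (run Cy (\<alpha>, q)) = q" and lr: "last (fst (run Cy (\<alpha>, q))) = last \<alpha>"
    using g by (auto simp: lgc_def)
  have R: "vpath E (\<beta> @ [], q) Cy \<and> based \<beta> (\<beta> @ [], q) Cy \<and>
     (\<exists>v. fst (run Cy (\<alpha> @ [], q)) = \<alpha> @ v \<and> run Cy (\<beta> @ [], q) = (\<beta> @ v, snd (run Cy (\<alpha> @ [], q))))"
    by (rule replay[OF vx bx ane Suc.prems(1,2)])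
  then obtain v where v: "fst (run Cy (\<alpha>, q)) = \<alpha> @ v" "run Cy (\<beta>, q) = (\<beta> @ v, q)" "vpath E (\<beta>, q) Cy"
    using sr by auto
  have l1: "last (\<beta> @ v) = last \<alpha>" using last_app_eq[OF ane Suc.prems(1,2)] v(1) lr by simp
  have IH: "vpath E (\<beta>@v,q) (concat (replicate k Cy)) \<and>
     (\<exists>V. run (concat (replicate k Cy)) (\<beta>@v,q) = ((\<beta>@v)@V, q) \<and> last ((\<beta>@v) @ V) = last \<alpha>)"
    using Suc.IH[of "\<beta>@v"] l1 Suc.prems(1) by simp
  then obtain V where V: "run (concat (replicate k Cy)) (\<beta>@v,q) = ((\<beta>@v)@V, q)" "last ((\<beta>@v) @ V) = last \<alpha>"
    by blast
  show ?case using v IH V by (intro conjI exI[of _ "v@V"]) auto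
qed

lemma pweight_list: "pweight w e n = sum_list (map w (map e [0..<n]))"
proof -
  have "sum_list (map (\<lambda>k. w (e k)) [0..<n]) = sum (\<lambda>k. w (e k)) (set [0..<n])"
    by (rule sum_set_upt_conv_sum_list_nat[symmetric])
  then show ?thesis by (simp add: pweight_def lessThan_atLeast0 comp_def)
qed

lemma neg_mult_help: "-a \<le> b \<Longrightarrow> (0::int) \<le> c \<Longrightarrow> -(c*a) \<le> c*b"
  using mult_left_mono[of "-a" b c] by simp

lemma take_app_ge: "length X \<le> n \<Longrightarrow> take n (X @ Y) = X @ take (n - length X) Y"
  by simp

lemma concat_rep_comm: "concat (replicate m xs) @ xs = xs @ concat (replicate m xs)"
  by (induction m) auto

lemma good_to_liminf:
  assumes vp: "vpath E z0 (P@Cy)" and g: "lgc E w (run P z0) Cy"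
  shows "\<exists>c e. c 0 = z0 \<and> inf_path E c e \<and> lim_inf_avg w e > 0"
proof -
  obtain \<alpha> q where z1: "run P z0 = (\<alpha>, q)" by (cases "run P z0") auto
  define L where "L = length Cy"
  define W where "W = sum_list (map w Cy)"
  define lp where "lp = length P"
  have Wpos: "0 < W" using g by (simp add: lgc_def W_def)
  then have Cne: "Cy \<noteq> []" by (auto simp: W_def)
  then have Lpos: "0 < L" by (simp add: L_def)
  have g': "lgc E w (\<alpha>, q) Cy" using g z1 by simp
  have ane: "\<alpha> \<noteq> []"
  proof -
    obtain x xs where "Cy = x # xs" using Cne by (cases Cy) auto
    then show ?thesis using g' vpath_ne[of E "(\<alpha>,q)" x xs] by (simp add: lgc_def)
  qed
  define e' where "e' = (\<lambda>k. if k < lp then P ! k else Cy ! ((k - lp) mod L))"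
  define c' where "c' = (\<lambda>k. run (map e' [0..<k]) z0)"
  have mapeq: "map e' [0..<lp + m*L] = P @ concat (replicate m Cy)" for m
  proof (induction m)
    case 0
    show ?case by (rule nth_equalityI) (auto simp: e'_def lp_def)
  next
    case (Suc m)
    have u: "[0..<lp + Suc m * L] = [0..<lp + m*L] @ [lp + m*L..<lp + m*L + L]"
      using upt_add_eq_append[of 0 "lp + m*L" L] by (simp add: algebra_simps)
    have "map e' [lp + m*L..<lp + m*L + L] = Cy"
    proof (rule nth_equalityI)
      show "length (map e' [lp + m * L..<lp + m * L + L]) = length Cy" by (simp add: L_def)
    next
      fix r assume "r < length (map e' [lp + m * L..<lp + m * L + L])"
      then have r: "r < L" by simp
      have "(m * L + r) mod L = r" using r by simp
      then show "map e' [lp + m * L..<lp + m * L + L] ! r = Cy ! r"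
        using r by (simp add: e'_def add.assoc)
    qed
    then show ?case using Suc u by (simp add: concat_rep_comm)
  qed
  have vpP: "vpath E z0 P" using vp by simp
  have vall: "vpath E z0 (P @ concat (replicate m Cy))" for m
    using vpP z1 rep_cycle[OF g' ane, of \<alpha> m] ane by simp
  have ip: "inf_path E c' e'"
    unfolding inf_path_def
  proof
    fix k
    define N where "N = lp + Suc k * L"
    have "Suc k * 1 \<le> Suc k * L" using Lpos by (intro mult_le_mono2) simp
    then have kN: "k < N" by (simp add: N_def)
    have v: "vpath E z0 (map e' [0..<N])" using vall[of "Suc k"] mapeq[of "Suc k"] by (simp add: N_def)
    have s: "step E (run (take k (map e' [0..<N])) z0) (map e' [0..<N] ! k) (run (take (Suc k) (map e' [0..<N])) z0)"
      using vpath_nth[OF v] kN by simp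
    have t1: "take k (map e' [0..<N]) = map e' [0..<k]" using kN by (simp add: take_map take_upt)
    have t2: "take (Suc k) (map e' [0..<N]) = map e' [0..<Suc k]" using kN by (simp add: take_map take_upt)
    show "step E (c' k) (e' k) (c' (Suc k))" using s t1 t2 kN by (simp add: c'_def)
  qed
  define M1 where "M1 = sum_list (map (\<lambda>x. \<bar>w x\<bar>) Cy)"
  define M2 where "M2 = sum_list (map (\<lambda>x. \<bar>w x\<bar>) P)"
  define B0 where "B0 = int L * M2 + W * int (lp + L) + int L * M1"
  have M1: "0 \<le> M1" and M2: "0 \<le> M2" using abs_sum_nonneg by (auto simp: M1_def M2_def)
  have SP: "- M2 \<le> sum_list (map w P)" using sum_take_ge[of w P "length P"] by (simp add: M2_def)
  have lower: "W * int n - B0 \<le> int L * pweight w e' n" for n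
  proof (cases "n < lp")
    case True
    have "map e' [0..<n] = take n P"
    proof -
      have "take n (map e' [0..<lp + 0*L]) = map e' [0..<n]" using True by (simp add: take_map take_upt)
      then show ?thesis using mapeq[of 0] by simp
    qed
    then have "- M2 \<le> pweight w e' n" using sum_take_ge[of w P n] by (simp add: pweight_list M2_def)
    then have "- (int L * M2) \<le> int L * pweight w e' n" by (rule neg_mult_help) simp
    moreover have "W * int n \<le> W * int (lp + L)" using True Wpos by (intro mult_left_mono) auto
    moreover have "0 \<le> int L * M1" using M1 by simp
    ultimately show ?thesis unfolding B0_def by linarith
  next
    case False
    define m where "m = (n - lp) div L"
    define N where "N = lp + m * L"
    have dm: "n - lp = m * L + (n - lp) mod L" by (simp add: m_def)
    have ml: "(n - lp) mod L < L" using Lpos by simp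
    have Nle: "N \<le> n" using False dm unfolding N_def by linarith
    have nlt: "n < N + L" using False dm ml unfolding N_def by linarith
    have mapn: "map e' [0..<n] = P @ concat (replicate m Cy) @ take (n - N) Cy"
    proof -
      have "take n (map e' [0..<lp + Suc m * L]) = map e' [0..<n]"
        using nlt by (simp add: take_map take_upt N_def algebra_simps)
      moreover have "length (P @ concat (replicate m Cy)) = N"
        by (simp add: N_def lp_def L_def length_concat sum_list_replicate) 
      moreover have m1: "map e' [0..<lp + Suc m * L] = (P @ concat (replicate m Cy)) @ Cy"
        using mapeq[of "Suc m"] by (simp only: concat_rep_Suc append_assoc)
      ultimately have "map e' [0..<n] = take n ((P @ concat (replicate m Cy)) @ Cy)" by simp
      also have "\<dots> = (P @ concat (replicate m Cy)) @ take (n - N) Cy"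
        using take_app_ge[of "P @ concat (replicate m Cy)" n Cy] \<open>length (P @ concat (replicate m Cy)) = N\<close> Nle
        by simp
      finally show ?thesis by simp
    qed
    have pw: "pweight w e' n = sum_list (map w P) + int m * W + sum_list (map w (take (n - N) Cy))"
      by (simp add: pweight_list mapn sum_rep W_def)
    have tk: "- M1 \<le> sum_list (map w (take (n - N) Cy))" using sum_take_ge by (simp add: M1_def)
    have Lm: "int n - int lp - int L \<le> int L * int m"
    proof -
      have "n < lp + m*L + L" using nlt by (simp add: N_def)
      then have "int n < int (lp + m*L + L)" by (simp only: of_nat_less_iff)
      moreover have "int (lp + m*L + L) = int lp + int L * int m + int L" by simp
      ultimately show ?thesis by linarith
    qed
    have "W * (int n - int lp - int L) \<le> W * (int L * int m)" using Lm Wpos by (intro mult_left_mono) auto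
    moreover have "int L * pweight w e' n = int L * sum_list (map w P) + (int L * int m) * W + int L * sum_list (map w (take (n - N) Cy))"
      using pw by (simp add: algebra_simps)
    moreover have "- (int L * M2) \<le> int L * sum_list (map w P)" using SP by (rule neg_mult_help) simp
    moreover have "- (int L * M1) \<le> int L * sum_list (map w (take (n - N) Cy))" using tk by (rule neg_mult_help) simp
    ultimately show ?thesis by (simp add: B0_def algebra_simps)
  qed
  define a where "a = real_of_int W / (2 * real L)"
  have apos: "0 < a" using Wpos Lpos by (simp add: a_def)
  have B0: "0 \<le> B0" using M1 M2 Wpos by (simp add: B0_def)
  have ev: "\<forall>\<^sub>F n in sequentially. ereal a \<le> ereal (real_of_int (pweight w e' n) / real n)"
  proof (rule eventually_sequentiallyI[of "nat (2 * B0 + 1)"])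
    fix n assume n: "nat (2 * B0 + 1) \<le> n"
    then have npos: "0 < n" using B0 by simp
    have "2 * B0 < int n" using n B0 by linarith
    moreover have "1 * int n \<le> W * int n" using Wpos by (intro mult_right_mono) auto
    ultimately have "2 * B0 \<le> W * int n" by simp
    then have "W * int n \<le> 2 * (int L * pweight w e' n)" using lower[of n] by linarith
    then have "real_of_int (W * int n) \<le> real_of_int (2 * (int L * pweight w e' n))"
      by (simp only: of_int_le_iff)
    then have "real_of_int W * real n \<le> 2 * real L * real_of_int (pweight w e' n)"
      by (simp add: mult.assoc)
    then have "a * real n \<le> real_of_int (pweight w e' n)"
      using Lpos by (simp add: a_def field_simps)
    then show "ereal a \<le> ereal (real_of_int (pweight w e' n) / real n)"
      using npos by (simp add: pos_le_divide_eq)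
  qed
  have "ereal a \<le> lim_inf_avg w e'"
    unfolding lim_inf_avg_def by (rule Liminf_bounded[OF ev])
  then have "0 < lim_inf_avg w e'" using apos by (meson ereal_less(2) less_le_trans)
  moreover have "c' 0 = z0" by (simp add: c'_def)
  ultimately show ?thesis using ip by blast
qed

theorem lemma3:
  fixes Q :: "'q set" and \<Gamma> :: "'g set" and q0 :: 'q and bsym :: 'g
    and E :: "('q,'g) edge set" and w :: "('q,'g) edge \<Rightarrow> int"
  assumes "wps Q \<Gamma> q0 bsym E"
  shows "((\<exists>c e. c 0 = ([bsym], q0) \<and> inf_path E c e \<and> lim_sup_avg w e > 0) \<longleftrightarrow>
          (\<exists>c e. c 0 = ([bsym], q0) \<and> inf_path E c e \<and> lim_inf_avg w e > 0)) \<and>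
         ((\<exists>c e. c 0 = ([bsym], q0) \<and> inf_path E c e \<and> lim_inf_avg w e > 0) \<longleftrightarrow>
          (\<exists>c e n i j. c 0 = ([bsym], q0) \<and> fin_path E c e n \<and> i \<le> j \<and> j \<le> n \<and>
             good_cycle E w (\<lambda>k. c (i + k)) (\<lambda>k. e (i + k)) (j - i)))"
    (is "(?A \<longleftrightarrow> ?B) \<and> (?B \<longleftrightarrow> ?C)")
proof -
  have AC: "?A \<Longrightarrow> ?C"
  proof -
    assume "?A"
    then obtain c e where c0: "c 0 = ([bsym], q0)" and ip: "inf_path E c e" and pos: "lim_sup_avg w e > 0"
      by blast
    show ?C
    proof (rule ccontr)
      assume nC: "\<not> ?C"
      have ng: "\<And>P Cy. vpath E (c 0) (P@Cy) \<Longrightarrow> \<not> lgc E w (run P (c 0)) Cy"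
      proof
        fix P Cy assume "vpath E (c 0) (P@Cy)" "lgc E w (run P (c 0)) Cy"
        from conv_good[OF this] show False using nC c0 by simp
      qed
      interpret pi_ng Q \<Gamma> q0 bsym E c e w
        by unfold_locales (use assms ip c0 ng in auto)
      obtain B where "\<forall>t. pweight w e t \<le> B" using bounded by blast
      then have "lim_sup_avg w e \<le> 0" by (rule limsup_bound)
      then show False using pos by simp
    qed
  qed
  have CB: "?C \<Longrightarrow> ?B"
  proof -
    assume "?C"
    then obtain c e n i j where c0: "c 0 = ([bsym], q0)" and fp: "fin_path E c e n" and ij: "i \<le> j" "j \<le> n"
      and g: "good_cycle E w (\<lambda>k. c (i + k)) (\<lambda>k. e (i + k)) (j - i)" by blast
    obtain P Cy where "vpath E ([bsym], q0) (P@Cy)" "lgc E w (run P ([bsym], q0)) Cy"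
      using lists_of_good[OF c0 fp ij g] by blast
    then show ?B using good_to_liminf by blast
  qed
  have BA: "?B \<Longrightarrow> ?A"
  proof -
    assume "?B"
    then obtain c e where c0: "c 0 = ([bsym], q0)" and ip: "inf_path E c e" and pos: "lim_inf_avg w e > 0"
      by blast
    have "lim_inf_avg w e \<le> lim_sup_avg w e"
      unfolding lim_inf_avg_def lim_sup_avg_def by (rule Liminf_le_Limsup[OF trivial_limit_sequentially])
    then show ?A using c0 ip pos by (intro exI[of _ c] exI[of _ e]) auto
  qed
  show ?thesis using AC CB BA by blast
qed

end
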